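(* Let $\mathcal I=\mathbb R^d$, $\mathcal T$ its unit sphere, $\mathcal G$ a compact Abelian group with normalized Haar measure $dg$ acting on $\mathcal I$ by a unitary representation, and $\mathcal G_0\subset\mathcal G$ measurable with $V=\int_{\mathcal G_0}dg>0$. For $I\in\mathcal I$, $\bar g\in\mathcal G$ let $\rho_{I,\bar g}$ be the probability measure on $\mathcal I$ given by $\rho_{I,\bar g}(A)=\frac1V\int_{\{g\in\bar g\mathcal G_0:\ gI\in A\}}dg$. For $t\in\mathcal T$ and a probability measure $\rho$ on $\mathcal I$, let $\rho^t$ be its pushforward to $\mathbb R$ under $I\mapsto\langle I,t\rangle$. Define the TP-POG representation $\bar\Psi(I):\mathcal G\times\mathcal T\to\mathcal P(\mathbb R)$ by $\bar\Psi(I)(g,t)=(\rho_{I,g})^t$. Then $\bar\Psi$ is covariant: for all $I\in\mathcal I$, $\tilde g,g\in\mathcal G$, $t\in\mathcal T$, $$\bar\Psi(\tilde gI)(g,t)=\bar\Psi(I)(\tilde gg,t).$$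
   Context: $\bar g\mathcal G_0=\{\bar g g': g'\in\mathcal G_0\}$; $\mathcal P(\mathbb R)$ is the set of Borel probability measures on $\mathbb R$. *)

theory Defs
  imports "HOL-Analysis.Analysis" "HOL-Probability.Probability"
begin

definition normalized_haar :: "'g::{ab_group_add, topological_space} measure \<Rightarrow> bool" where
  "normalized_haar M \<longleftrightarrow> prob_space M \<and> sets M = sets (borel :: 'g measure)
     \<and> (\<forall>h. distr M M (\<lambda>g. h + g) = M)"

definition unitary_rep :: "('g::{ab_group_add, topological_space} \<Rightarrow> real^'n \<Rightarrow> real^'n) \<Rightarrow> bool" where
  "unitary_rep \<pi> \<longleftrightarrow> (\<forall>g. orthogonal_transformation (\<pi> g)) \<and> \<pi> 0 = id
     \<and> (\<forall>g h. \<pi> (g + h) = \<pi> g \<circ> \<pi> h) \<and> (\<forall>x. continuous_on UNIV (\<lambda>g. \<pi> g x))"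

definition rho :: "'g::{ab_group_add, topological_space} measure \<Rightarrow> ('g \<Rightarrow> real^'n \<Rightarrow> real^'n)
    \<Rightarrow> 'g set \<Rightarrow> real^'n \<Rightarrow> 'g \<Rightarrow> (real^'n) measure" where
  "rho M \<pi> G0 I gbar =
     distr (density M (\<lambda>g. indicator ((\<lambda>g'. gbar + g') ` G0) g / ennreal (measure M G0)))
           borel (\<lambda>g. \<pi> g I)"

definition proj_measure :: "(real^'n) measure \<Rightarrow> real^'n \<Rightarrow> real measure" where
  "proj_measure \<rho> t = distr \<rho> borel (\<lambda>I. I \<bullet> t)"

definition PsiBar :: "'g::{ab_group_add, topological_space} measure \<Rightarrow> ('g \<Rightarrow> real^'n \<Rightarrow> real^'n)
    \<Rightarrow> 'g set \<Rightarrow> real^'n \<Rightarrow> 'g \<Rightarrow> real^'n \<Rightarrow> real measure" where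
  "PsiBar M \<pi> G0 I g t = proj_measure (rho M \<pi> G0 I g) t"

end

theory Submission
  imports Defs
begin

lemma trans_img: "(\<lambda>g'. (b::'g::ab_group_add) + g') ` G = (\<lambda>x. x - b) -` G"
  by (auto simp: image_iff) (metis add.commute diff_add_cancel)

theorem theorem9:
  fixes M :: "'g::{ab_group_add, topological_group_add, t2_space} measure"
    and \<pi> :: "'g \<Rightarrow> real^'n \<Rightarrow> real^'n"
    and G0 :: "'g set"
  assumes "compact (UNIV :: 'g set)"
    and "normalized_haar M"
    and "unitary_rep \<pi>"
    and "G0 \<in> sets M"
    and "measure M G0 > 0"
  shows "\<forall>I gt g t. norm t = 1 \<longrightarrow>
           PsiBar M \<pi> G0 (\<pi> gt I) g t = PsiBar M \<pi> G0 I (gt + g) t"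
proof (intro allI impI)
  fix I gt g and t :: "real^'n"
  have sM: "sets M = sets borel" and inv: "\<And>h. distr M M (\<lambda>g. h + g) = M"
    using assms(2) unfolding normalized_haar_def by auto
  have mcong: "measurable M N = measurable borel N" for N :: "'c measure"
    by (rule measurable_cong_sets[OF sM refl])
  have mcong2: "measurable N M = measurable N borel" for N :: "'c measure"
    by (rule measurable_cong_sets[OF refl sM])
  have hom: "\<pi> (a + b) x = \<pi> a (\<pi> b x)" for a b x
    using assms(3) unfolding unitary_rep_def by auto
  have cont: "continuous_on UNIV (\<lambda>g. \<pi> g x)" for x
    using assms(3) unfolding unitary_rep_def by auto
  have piM: "(\<lambda>h. \<pi> h x) \<in> borel_measurable M" for x
    unfolding mcong using cont by (intro borel_measurable_continuous_onI) auto
  have trM: "(\<lambda>h. b + h) \<in> measurable M M" for b :: 'g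
    unfolding mcong mcong2 by (intro borel_measurable_continuous_onI continuous_intros)
  define f where "f = (\<lambda>gbar h. indicator ((\<lambda>g'. gbar + g') ` G0) h / ennreal (measure M G0))"
  have fM: "f b \<in> borel_measurable M" for b
  proof -
    have "(\<lambda>g'. b + g') ` G0 \<in> sets M"
    proof -
      have "(\<lambda>x. x - b) \<in> measurable M M"
        unfolding mcong mcong2 by (intro borel_measurable_continuous_onI continuous_intros)
      hence "(\<lambda>x. x - b) -` G0 \<inter> space M \<in> sets M" using assms(4) by (rule measurable_sets)
      thus ?thesis by (simp add: trans_img sets_eq_imp_space_eq[OF sM])
    qed
    note [measurable] = this
    show ?thesis unfolding f_def by measurable
  qed
  have fshift: "f (gt + g) (gt + h) = f g h" for h
  proof -
    have "(gt + h \<in> (\<lambda>g'. (gt + g) + g') ` G0) = (h \<in> (\<lambda>g'. g + g') ` G0)"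
      by (auto simp: image_iff algebra_simps)
    thus ?thesis unfolding f_def indicator_def by simp
  qed
  have "rho M \<pi> G0 I (gt + g) = distr (density M (f (gt+g))) borel (\<lambda>h. \<pi> h I)"
    unfolding rho_def f_def by simp
  also have "density M (f (gt+g)) = density (distr M M (\<lambda>h. gt + h)) (f (gt+g))"
    using inv by simp
  also have "\<dots> = distr (density M (\<lambda>h. f (gt+g) (gt + h))) M (\<lambda>h. gt + h)"
    by (rule density_distr[OF fM trM])
  also have "(\<lambda>h. f (gt+g) (gt + h)) = f g" using fshift by auto
  also have "distr (distr (density M (f g)) M (\<lambda>h. gt + h)) borel (\<lambda>h. \<pi> h I)
      = distr (density M (f g)) borel ((\<lambda>h. \<pi> h I) \<circ> (\<lambda>h. gt + h))"
    by (rule distr_distr) (auto simp: piM trM)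
  also have "(\<lambda>h. \<pi> h I) \<circ> (\<lambda>h. gt + h) = (\<lambda>h. \<pi> h (\<pi> gt I))"
    by (auto simp: hom add.commute)
  also have "distr (density M (f g)) borel (\<lambda>h. \<pi> h (\<pi> gt I)) = rho M \<pi> G0 (\<pi> gt I) g"
    unfolding rho_def f_def by simp
  finally show "PsiBar M \<pi> G0 (\<pi> gt I) g t = PsiBar M \<pi> G0 I (gt + g) t"
    unfolding PsiBar_def by simp
qed

end
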